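(* Let $G$ be a countable discrete group, $C$ a subgroup, $\lambda$ a one-dimensional representation of $C$, and $\rho$ a $*$-representation of $C^*(G)$ such that $\rho(c) = \lambda(c)1$ for all $c\in C$. Then $\ker \Lambda_{\tilde\lambda} \cap \mathbb C G \subseteq \ker \rho \cap \mathbb C G$.
   Context: $C^*(G)$ is the full group C*-algebra and $\mathbb C G\subset C^*(G)$ the group algebra. A one-dimensional representation is a homomorphism to the unit circle. $\tilde\lambda: G\to\mathbb C$ is $\lambda$ on $C$ and $0$ off $C$; it is positive definite and extends to a state on $C^*(G)$, and $\Lambda_{\tilde\lambda}$ is the associated GNS representation of $C^*(G)$. *)

theory Defs
  imports "HOL-Analysis.Analysis" "HOL-Algebra.Group"
begin

definition group_alg :: "('g, 'b) monoid_scheme \<Rightarrow> ('g \<Rightarrow> complex) set" where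
  "group_alg G = {a. finite {g. a g \<noteq> 0} \<and> {g. a g \<noteq> 0} \<subseteq> carrier G}"

definition ga_mult :: "('g, 'b) monoid_scheme \<Rightarrow> ('g \<Rightarrow> complex) \<Rightarrow> ('g \<Rightarrow> complex) \<Rightarrow> ('g \<Rightarrow> complex)" where
  "ga_mult G a b = (\<lambda>g. if g \<in> carrier G
      then (\<Sum>h\<in>{h. a h \<noteq> 0}. a h * b (inv\<^bsub>G\<^esub> h \<otimes>\<^bsub>G\<^esub> g)) else 0)"

definition ga_star :: "('g, 'b) monoid_scheme \<Rightarrow> ('g \<Rightarrow> complex) \<Rightarrow> ('g \<Rightarrow> complex)" where
  "ga_star G a = (\<lambda>g. if g \<in> carrier G then cnj (a (inv\<^bsub>G\<^esub> g)) else 0)"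

definition ga_delta :: "'g \<Rightarrow> ('g \<Rightarrow> complex)" where
  "ga_delta g = (\<lambda>h. if h = g then 1 else 0)"

definition one_dim_rep :: "('g, 'b) monoid_scheme \<Rightarrow> 'g set \<Rightarrow> ('g \<Rightarrow> complex) \<Rightarrow> bool" where
  "one_dim_rep G C lam \<longleftrightarrow>
     (\<forall>c\<in>C. \<forall>d\<in>C. lam (c \<otimes>\<^bsub>G\<^esub> d) = lam c * lam d) \<and> (\<forall>c\<in>C. cmod (lam c) = 1)"

definition lam_tilde :: "'g set \<Rightarrow> ('g \<Rightarrow> complex) \<Rightarrow> 'g \<Rightarrow> complex" where
  "lam_tilde C lam g = (if g \<in> C then lam g else 0)"

definition tilde_state :: "'g set \<Rightarrow> ('g \<Rightarrow> complex) \<Rightarrow> ('g \<Rightarrow> complex) \<Rightarrow> complex" where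
  "tilde_state C lam a = (\<Sum>g\<in>{g. a g \<noteq> 0}. a g * lam_tilde C lam g)"

text \<open>ker of the GNS representation intersected with CG: Lambda(a)[x] = [a x] on the dense
  image of CG in the GNS space, with norm squared phi((a x)^* (a x)).\<close>
definition gns_kernel_CG :: "('g, 'b) monoid_scheme \<Rightarrow> 'g set \<Rightarrow> ('g \<Rightarrow> complex) \<Rightarrow> ('g \<Rightarrow> complex) set" where
  "gns_kernel_CG G C lam = {a \<in> group_alg G. \<forall>x\<in>group_alg G.
      tilde_state C lam (ga_mult G (ga_star G (ga_mult G a x)) (ga_mult G a x)) = 0}"

definition cnorm :: "('h \<Rightarrow> 'h \<Rightarrow> complex) \<Rightarrow> 'h \<Rightarrow> real" where
  "cnorm ip x = sqrt (Re (ip x x))"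

definition complex_hilbert :: "(complex \<Rightarrow> 'h::ab_group_add \<Rightarrow> 'h) \<Rightarrow> ('h \<Rightarrow> 'h \<Rightarrow> complex) \<Rightarrow> bool" where
  "complex_hilbert sc ip \<longleftrightarrow>
     (\<forall>a x y. sc a (x + y) = sc a x + sc a y) \<and>
     (\<forall>a b x. sc (a + b) x = sc a x + sc b x) \<and>
     (\<forall>a b x. sc (a * b) x = sc a (sc b x)) \<and>
     (\<forall>x. sc 1 x = x) \<and>
     (\<forall>x y z. ip (x + y) z = ip x z + ip y z) \<and>
     (\<forall>a x y. ip (sc a x) y = a * ip x y) \<and>
     (\<forall>x y. ip y x = cnj (ip x y)) \<and>
     (\<forall>x. Re (ip x x) \<ge> 0) \<and>
     (\<forall>x. ip x x = 0 \<longrightarrow> x = 0) \<and>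
     (\<forall>X :: nat \<Rightarrow> 'h. (\<forall>e>0. \<exists>N. \<forall>m\<ge>N. \<forall>n\<ge>N. cnorm ip (X m - X n) < e) \<longrightarrow>
        (\<exists>L. \<forall>e>0. \<exists>N. \<forall>n\<ge>N. cnorm ip (X n - L) < e))"

definition bounded_op :: "(complex \<Rightarrow> 'h::ab_group_add \<Rightarrow> 'h) \<Rightarrow> ('h \<Rightarrow> 'h \<Rightarrow> complex) \<Rightarrow> ('h \<Rightarrow> 'h) \<Rightarrow> bool" where
  "bounded_op sc ip T \<longleftrightarrow>
     (\<forall>x y. T (x + y) = T x + T y) \<and> (\<forall>a x. T (sc a x) = sc a (T x)) \<and>
     (\<exists>K. \<forall>x. cnorm ip (T x) \<le> K * cnorm ip x)"

text \<open>A *-representation of CG by bounded operators (equivalently, the restriction to CG of a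
  *-representation of the full group C*-algebra C*(G)).\<close>
definition star_rep_CG :: "('g, 'b) monoid_scheme \<Rightarrow> (complex \<Rightarrow> 'h::ab_group_add \<Rightarrow> 'h) \<Rightarrow>
    ('h \<Rightarrow> 'h \<Rightarrow> complex) \<Rightarrow> (('g \<Rightarrow> complex) \<Rightarrow> 'h \<Rightarrow> 'h) \<Rightarrow> bool" where
  "star_rep_CG G sc ip rho \<longleftrightarrow>
     (\<forall>a\<in>group_alg G. bounded_op sc ip (rho a)) \<and>
     (\<forall>a\<in>group_alg G. \<forall>b\<in>group_alg G. rho (\<lambda>g. a g + b g) = (\<lambda>x. rho a x + rho b x)) \<and>
     (\<forall>a\<in>group_alg G. \<forall>c. rho (\<lambda>g. c * a g) = (\<lambda>x. sc c (rho a x))) \<and>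
     (\<forall>a\<in>group_alg G. \<forall>b\<in>group_alg G. rho (ga_mult G a b) = rho a \<circ> rho b) \<and>
     (\<forall>a\<in>group_alg G. \<forall>x y. ip (rho a x) y = ip x (rho (ga_star G a) y))"

end

theory Submission
  imports Defs
begin

lemma in_group_alg:
  fixes G :: "('g, 'b) monoid_scheme"
  shows
  "finite F \<Longrightarrow> F \<subseteq> carrier G \<Longrightarrow> (\<And>g. g \<notin> F \<Longrightarrow> f g = 0) \<Longrightarrow> f \<in> group_alg G"
  unfolding group_alg_def by (auto intro: finite_subset)


context group begin

lemma inv_mult_one_iff: "h \<in> carrier G \<Longrightarrow> g \<in> carrier G \<Longrightarrow> inv h \<otimes> g = \<one> \<longleftrightarrow> h = g"
  by (metis inv_equality inv_inv inv_closed r_inv)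

lemma mult_delta_one:
  assumes a: "a \<in> group_alg G"
  shows "ga_mult G a (ga_delta \<one>) = a"
proof
  fix g
  show "ga_mult G a (ga_delta \<one>) g = a g"
  proof (cases "g \<in> carrier G")
    case True
    have sub: "{h. a h \<noteq> 0} \<subseteq> carrier G" using a by (simp add: group_alg_def)
    have "ga_mult G a (ga_delta \<one>) g = (\<Sum>h\<in>{h. a h \<noteq> 0}. if h = g then a h else 0)"
      unfolding ga_mult_def ga_delta_def using True sub
      by (auto intro!: sum.cong simp: inv_mult_one_iff) 
    also have "\<dots> = a g" using a by (simp add: group_alg_def sum.delta')
    finally show ?thesis .
  next
    case False
    then show ?thesis using a by (auto simp: ga_mult_def group_alg_def)
  qed
qed


lemma supp_sub: "a \<in> group_alg G \<Longrightarrow> a k \<noteq> 0 \<Longrightarrow> k \<in> carrier G"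
  by (auto simp: group_alg_def)

lemma supp_fin: "a \<in> group_alg G \<Longrightarrow> finite {k. a k \<noteq> 0}"
  by (auto simp: group_alg_def)

lemma star_mult_formula:
  assumes a: "a \<in> group_alg G" and g: "g \<in> carrier G"
  shows "ga_mult G (ga_star G a) a g = (\<Sum>k\<in>{k. a k \<noteq> 0}. cnj (a k) * a (k \<otimes> g))"
proof -
  let ?A = "{k. a k \<noteq> 0}"
  have supp: "{h. ga_star G a h \<noteq> 0} = m_inv G ` ?A"
  proof
    show "{h. ga_star G a h \<noteq> 0} \<subseteq> m_inv G ` ?A"
    proof
      fix h assume "h \<in> {h. ga_star G a h \<noteq> 0}"
      then have h: "h \<in> carrier G" "a (inv h) \<noteq> 0" by (auto simp: ga_star_def split: if_splits)
      then show "h \<in> m_inv G ` ?A" by (metis (mono_tags, lifting) image_iff inv_inv mem_Collect_eq)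
    qed
    show "m_inv G ` ?A \<subseteq> {h. ga_star G a h \<noteq> 0}"
      using supp_sub[OF a] by (auto simp: ga_star_def)
  qed
  have Asub: "?A \<subseteq> carrier G" using supp_sub[OF a] by blast
  have inj: "inj_on (m_inv G) ?A"
    by (rule inj_on_subset[OF inv_inj Asub])
  have "ga_mult G (ga_star G a) a g = (\<Sum>h\<in>m_inv G ` ?A. ga_star G a h * a (inv h \<otimes> g))"
    using g by (simp add: ga_mult_def supp)
  also have "\<dots> = (\<Sum>k\<in>?A. ga_star G a (inv k) * a (inv (inv k) \<otimes> g))"
    by (simp add: sum.reindex[OF inj])
  also have "\<dots> = (\<Sum>k\<in>?A. cnj (a k) * a (k \<otimes> g))"
    using supp_sub[OF a] by (intro sum.cong) (auto simp: ga_star_def)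
  finally show ?thesis .
qed

lemma state_formula:
  assumes a: "a \<in> group_alg G"
  shows "tilde_state C lam (ga_mult G (ga_star G a) a) =
     (\<Sum>k\<in>{k. a k \<noteq> 0}. \<Sum>m\<in>{k. a k \<noteq> 0}. cnj (a k) * a m * lam_tilde C lam (inv k \<otimes> m))"
proof -
  let ?A = "{k. a k \<noteq> 0}"
  let ?d = "ga_mult G (ga_star G a) a"
  let ?lt = "lam_tilde C lam"
  define S where "S = (\<lambda>(k,m). inv k \<otimes> m) ` (?A \<times> ?A)"
  have finA: "finite ?A" using supp_fin[OF a] .
  have finS: "finite S" unfolding S_def using finA by simp
  have Scar: "S \<subseteq> carrier G" unfolding S_def using supp_sub[OF a] by auto
  have dsupp: "{g. ?d g \<noteq> 0} \<subseteq> S"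
  proof
    fix g assume "g \<in> {g. ?d g \<noteq> 0}"
    then have dg: "?d g \<noteq> 0" by simp
    then have g: "g \<in> carrier G" by (auto simp: ga_mult_def split: if_splits)
    with dg obtain k where k: "k \<in> ?A" "a (k \<otimes> g) \<noteq> 0"
      by (auto simp: star_mult_formula[OF a g] elim: sum.not_neutral_contains_not_neutral)
    have kc: "k \<in> carrier G" using k supp_sub[OF a] by auto
    have "g = inv k \<otimes> (k \<otimes> g)" using kc g by (simp add: m_assoc[symmetric])
    then show "g \<in> S" unfolding S_def using k by (auto intro!: image_eqI[where x="(k, k \<otimes> g)"])
  qed
  have "tilde_state C lam ?d = (\<Sum>g\<in>S. ?d g * ?lt g)"
    unfolding tilde_state_def using dsupp finS by (intro sum.mono_neutral_left) auto
  also have "\<dots> = (\<Sum>g\<in>S. \<Sum>k\<in>?A. cnj (a k) * a (k \<otimes> g) * ?lt g)"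
    using Scar by (intro sum.cong) (auto simp: star_mult_formula[OF a] sum_distrib_right)
  also have "\<dots> = (\<Sum>k\<in>?A. \<Sum>g\<in>S. cnj (a k) * a (k \<otimes> g) * ?lt g)"
    by (rule sum.swap)
  also have "\<dots> = (\<Sum>k\<in>?A. \<Sum>m\<in>?A. cnj (a k) * a m * ?lt (inv k \<otimes> m))"
  proof (rule sum.cong[OF refl])
    fix k assume k: "k \<in> ?A"
    have kc: "k \<in> carrier G" using k supp_sub[OF a] by auto
    have inj: "inj_on (\<lambda>m. inv k \<otimes> m) ?A"
      using kc supp_sub[OF a] by (auto simp: inj_on_def)
    have sub: "(\<lambda>m. inv k \<otimes> m) ` ?A \<subseteq> S" unfolding S_def using k by auto
    have "(\<Sum>m\<in>?A. cnj (a k) * a m * ?lt (inv k \<otimes> m))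
        = (\<Sum>m\<in>?A. cnj (a k) * a (k \<otimes> (inv k \<otimes> m)) * ?lt (inv k \<otimes> m))"
      using kc supp_sub[OF a] by (intro sum.cong) (auto simp: m_assoc[symmetric])
    also have "\<dots> = (\<Sum>g\<in>(\<lambda>m. inv k \<otimes> m) ` ?A. cnj (a k) * a (k \<otimes> g) * ?lt g)"
      by (simp add: sum.reindex[OF inj])
    also have "\<dots> = (\<Sum>g\<in>S. cnj (a k) * a (k \<otimes> g) * ?lt g)"
    proof (rule sum.mono_neutral_left[OF finS sub], safe)
      fix g assume gS: "g \<in> S" and nim: "g \<notin> (\<lambda>m. inv k \<otimes> m) ` ?A"
      have gc: "g \<in> carrier G" using gS Scar by auto
      have "a (k \<otimes> g) = 0"
      proof (rule ccontr)
        assume "a (k \<otimes> g) \<noteq> 0"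
        moreover have "g = inv k \<otimes> (k \<otimes> g)" using kc gc by (simp add: m_assoc[symmetric])
        ultimately show False using nim by blast
      qed
      then show "cnj (a k) * a (k \<otimes> g) * ?lt g = 0" by simp
    qed
    finally show "(\<Sum>g\<in>S. cnj (a k) * a (k \<otimes> g) * ?lt g) = (\<Sum>m\<in>?A. cnj (a k) * a m * ?lt (inv k \<otimes> m))" by simp
  qed
  finally show ?thesis .
qed

end

context group begin
lemma delta_mult:
  assumes t: "t \<in> carrier G" and c: "c \<in> carrier G"
  shows "ga_mult G (ga_delta t) (ga_delta c) = ga_delta (t \<otimes> c)"
proof
  fix g
  have s: "{h. ga_delta t h \<noteq> 0} = {t}" by (auto simp: ga_delta_def)
  show "ga_mult G (ga_delta t) (ga_delta c) g = ga_delta (t \<otimes> c) g"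
    using t c by (auto simp: ga_mult_def s ga_delta_def inv_solve_left')
qed

end

lemma sc_zero:
  fixes sc :: "complex \<Rightarrow> 'h::ab_group_add \<Rightarrow> 'h"
  assumes "\<forall>a b x. sc (a + b) x = sc a x + sc b x"
  shows "sc 0 y = 0"
proof -
  have "sc (0 + 0) y = sc 0 y + sc 0 y" using assms by blast
  then show ?thesis by simp
qed

lemma sc_sum:
  fixes sc :: "complex \<Rightarrow> 'h::ab_group_add \<Rightarrow> 'h"
  assumes "\<forall>a b x. sc (a + b) x = sc a x + sc b x" and "finite F"
  shows "sc (\<Sum>m\<in>F. f m) y = (\<Sum>m\<in>F. sc (f m) y)"
  using assms(2) by (induction F rule: finite_induct) (auto simp: sc_zero[OF assms(1)] assms(1))


lemma delta_in: "m \<in> carrier G \<Longrightarrow> ga_delta m \<in> group_alg G"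
  by (rule in_group_alg[of "{m}"]) (auto simp: ga_delta_def)

lemma rho_lin:
  fixes G :: "('g, 'b) monoid_scheme" and sc :: "complex \<Rightarrow> 'h::ab_group_add \<Rightarrow> 'h"
  assumes rep: "star_rep_CG G sc ip rho" and hadd: "\<forall>a b x. sc (a + b) x = sc a x + sc b x"
    and fin: "finite F"
  shows "F \<subseteq> carrier G \<Longrightarrow> rho (\<lambda>g. \<Sum>m\<in>F. c m * ga_delta m g) = (\<lambda>x. \<Sum>m\<in>F. sc (c m) (rho (ga_delta m) x))"
  using fin
proof (induction F rule: finite_induct)
  case empty
  have z: "(\<lambda>g::'g. 0::complex) \<in> group_alg G" by (rule in_group_alg[of "{}"]) auto
  have hom: "\<forall>a\<in>group_alg G. \<forall>c. rho (\<lambda>g. c * a g) = (\<lambda>x. sc c (rho a x))"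
    using rep unfolding star_rep_CG_def by blast
  from hom[rule_format, OF z, of 0] show ?case by (simp add: sc_zero[OF hadd])
next
  case (insert x F)
  have xc: "x \<in> carrier G" and Fc: "F \<subseteq> carrier G" using insert by auto
  have A1: "(\<lambda>g. c x * ga_delta x g) \<in> group_alg G"
    by (rule in_group_alg[of "{x}"]) (use xc in \<open>auto simp: ga_delta_def\<close>)
  have A2: "(\<lambda>g. \<Sum>m\<in>F. c m * ga_delta m g) \<in> group_alg G"
    by (rule in_group_alg[of F]) (use Fc insert in \<open>auto simp: ga_delta_def intro!: sum.neutral\<close>)
  have "rho (\<lambda>g. \<Sum>m\<in>insert x F. c m * ga_delta m g)
      = rho (\<lambda>g. (\<lambda>g. c x * ga_delta x g) g + (\<lambda>g. \<Sum>m\<in>F. c m * ga_delta m g) g)"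
    using insert by simp
  also have "\<dots> = (\<lambda>y. rho (\<lambda>g. c x * ga_delta x g) y + rho (\<lambda>g. \<Sum>m\<in>F. c m * ga_delta m g) y)"
  proof -
    have add: "\<forall>a\<in>group_alg G. \<forall>b\<in>group_alg G. rho (\<lambda>g. a g + b g) = (\<lambda>x. rho a x + rho b x)"
      using rep unfolding star_rep_CG_def by blast
    show ?thesis using add[rule_format, OF A1 A2] by simp
  qed
  also have "rho (\<lambda>g. c x * ga_delta x g) = (\<lambda>y. sc (c x) (rho (ga_delta x) y))"
    using rep delta_in[OF xc] unfolding star_rep_CG_def by blast
  finally show ?case using insert Fc by simp
qed


context group begin

lemma cancel1: "t \<in> carrier G \<Longrightarrow> m \<in> carrier G \<Longrightarrow> t \<otimes> (inv t \<otimes> m) = m"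
  by (simp add: m_assoc[symmetric])

lemma chain3: "g \<in> carrier G \<Longrightarrow> h \<in> carrier G \<Longrightarrow> x \<in> carrier G \<Longrightarrow>
   (inv g \<otimes> h) \<otimes> (inv h \<otimes> x) = inv g \<otimes> x"
  by (simp add: m_assoc cancel1)

lemma inv_quot: "g \<in> carrier G \<Longrightarrow> h \<in> carrier G \<Longrightarrow> inv (inv g \<otimes> h) = inv h \<otimes> g"
  by (simp add: inv_mult_group)

lemma main:
  fixes sc :: "complex \<Rightarrow> 'h::ab_group_add \<Rightarrow> 'h" and rho :: "('a \<Rightarrow> complex) \<Rightarrow> 'h \<Rightarrow> 'h"
  assumes sub: "subgroup C G"
    and lam: "one_dim_rep G C lam"
    and hil: "complex_hilbert sc ip"
    and rep: "star_rep_CG G sc ip rho"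
    and onC: "\<forall>c\<in>C. rho (ga_delta c) = (\<lambda>x. sc (lam c) x)"
    and aK: "a \<in> gns_kernel_CG G C lam"
  shows "rho a = (\<lambda>x. 0)"
proof -
  interpret C: subgroup C G by (rule sub)
  have a: "a \<in> group_alg G" and ker: "\<forall>x\<in>group_alg G.
      tilde_state C lam (ga_mult G (ga_star G (ga_mult G a x)) (ga_mult G a x)) = 0"
    using aK by (auto simp: gns_kernel_CG_def)
  have hadd: "\<forall>a b x. sc (a + b) x = sc a x + sc b x" and hmul: "\<forall>a b x. sc (a * b) x = sc a (sc b x)"
    using hil by (simp_all add: complex_hilbert_def)
  have bnd: "\<forall>a\<in>group_alg G. bounded_op sc ip (rho a)"
    and mult: "\<forall>a\<in>group_alg G. \<forall>b\<in>group_alg G. rho (ga_mult G a b) = rho a \<circ> rho b"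
    using rep by (simp_all add: star_rep_CG_def)
  have lmul: "\<forall>c\<in>C. \<forall>d\<in>C. lam (c \<otimes> d) = lam c * lam d" and lnorm: "\<forall>c\<in>C. cmod (lam c) = 1"
    using lam by (simp_all add: one_dim_rep_def)
  have lam1: "lam \<one> = 1"
  proof -
    have "lam (\<one> \<otimes> \<one>) = lam \<one> * lam \<one>" using lmul C.one_closed by blast
    then have e: "lam \<one> * 1 = lam \<one> * lam \<one>" by simp
    have "cmod (lam \<one>) = 1" using lnorm C.one_closed by blast
    then have nz: "lam \<one> \<noteq> 0" by auto
    show ?thesis using e mult_left_cancel[OF nz, of 1 "lam \<one>"] by simp
  qed
  have laminv: "lam (inv c) = cnj (lam c)" if c: "c \<in> C" for c
  proof -
    have cc: "c \<in> carrier G" using c C.subset by blast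
    have "lam (c \<otimes> inv c) = lam c * lam (inv c)" using lmul c C.m_inv_closed[OF c] by blast
    then have e1: "lam c * lam (inv c) = 1" using lam1 cc by simp
    have n1: "cmod (lam c) = 1" using lnorm c by blast
    have e2: "lam c * cnj (lam c) = 1"
      using complex_norm_square[of "lam c"] n1 by simp
    have nz: "lam c \<noteq> 0" using n1 by auto
    have "lam c * lam (inv c) = lam c * cnj (lam c)" using e1 e2 by simp
    then show ?thesis using mult_left_cancel[OF nz] by blast
  qed
  let ?A = "{k. a k \<noteq> 0}"
  have finA: "finite ?A" using supp_fin[OF a] .
  have Asub: "?A \<subseteq> carrier G" using supp_sub[OF a] by blast
  have d1: "ga_delta \<one> \<in> group_alg G" by (rule delta_in) simp
  have "tilde_state C lam (ga_mult G (ga_star G a) a) = 0"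
    using ker d1 mult_delta_one[OF a] by force
  hence Q0: "(\<Sum>k\<in>?A. \<Sum>m\<in>?A. cnj (a k) * a m * lam_tilde C lam (inv k \<otimes> m)) = 0"
    using state_formula[OF a] by simp

  define K where "K = (\<lambda>g. {h \<in> carrier G. inv g \<otimes> h \<in> C})"
  define r where "r = (\<lambda>g. SOME t. t \<in> K g)"
  have Krefl: "g \<in> K g" if "g \<in> carrier G" for g
    using that by (simp add: K_def)
  have rK: "r g \<in> K g" if "g \<in> carrier G" for g
    unfolding r_def using Krefl[OF that] by (rule someI)
  have rc: "r g \<in> carrier G" if "g \<in> carrier G" for g
    using rK[OF that] by (simp add: K_def)
  have rinC: "inv (r g) \<otimes> g \<in> C" if g: "g \<in> carrier G" for g
  proof -
    have "inv g \<otimes> r g \<in> C" using rK[OF g] by (simp add: K_def)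
    then have "inv (inv g \<otimes> r g) \<in> C" by (rule C.m_inv_closed)
    then show ?thesis using inv_quot g rc[OF g] by simp
  qed
  have same_r: "r m = r k" if k: "k \<in> carrier G" and m: "m \<in> carrier G" and km: "inv k \<otimes> m \<in> C" for k m
  proof -
    have s1: "K m \<subseteq> K k"
    proof
      fix x assume "x \<in> K m"
      then have x: "x \<in> carrier G" "inv m \<otimes> x \<in> C" by (auto simp: K_def)
      have "inv k \<otimes> x = (inv k \<otimes> m) \<otimes> (inv m \<otimes> x)" using chain3 k m x by simp
      then show "x \<in> K k" using km x C.m_closed by (simp add: K_def)
    qed
    have s2: "K k \<subseteq> K m"
    proof
      fix x assume "x \<in> K k"
      then have x: "x \<in> carrier G" "inv k \<otimes> x \<in> C" by (auto simp: K_def)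
      have "inv m \<otimes> x = inv (inv k \<otimes> m) \<otimes> (inv k \<otimes> x)" using chain3 k m x inv_quot by simp
      then show "x \<in> K m" using km x C.m_closed C.m_inv_closed by (simp add: K_def)
    qed
    from s1 s2 have "K m = K k" by (rule subset_antisym)
    then show ?thesis by (simp add: r_def)
  qed
  have r_same: "inv k \<otimes> m \<in> C" if k: "k \<in> carrier G" and m: "m \<in> carrier G" and km: "r k = r m" for k m
  proof -
    have "inv k \<otimes> m = (inv k \<otimes> r m) \<otimes> (inv (r m) \<otimes> m)" using chain3[OF k rc[OF m] m] by simp
    then have "inv k \<otimes> m = (inv k \<otimes> r k) \<otimes> (inv (r m) \<otimes> m)" using km by simp
    moreover have "inv k \<otimes> r k \<in> C" using rK[OF k] by (simp add: K_def)
    ultimately show ?thesis using rinC[OF m] C.m_closed by simp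
  qed

  define mu where "mu = (\<lambda>m. a m * lam (inv (r m) \<otimes> m))"
  define P where "P = (\<lambda>t. \<Sum>m\<in>{m\<in>?A. r m = t}. mu m)"
  define T where "T = r ` ?A"
  have finT: "finite T" using finA by (simp add: T_def)
  have rT: "r ` ?A \<subseteq> T" by (simp add: T_def)

  have termeq: "cnj (a k) * a m * lam_tilde C lam (inv k \<otimes> m) = (if r k = r m then cnj (mu k) * mu m else 0)"
    if k: "k \<in> carrier G" and m: "m \<in> carrier G" for k m
  proof (cases "r k = r m")
    case True
    define t where "t = r k"
    have tc: "t \<in> carrier G" using rc[OF k] by (simp add: t_def)
    have c1: "inv t \<otimes> k \<in> C" using rinC[OF k] by (simp add: t_def)
    have c2: "inv t \<otimes> m \<in> C" using rinC[OF m] True by (simp add: t_def)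
    have "inv k \<otimes> m = inv (inv t \<otimes> k) \<otimes> (inv t \<otimes> m)"
      using chain3 k m tc inv_quot by simp
    then have "lam (inv k \<otimes> m) = cnj (lam (inv t \<otimes> k)) * lam (inv t \<otimes> m)"
      using lmul c1 c2 laminv C.m_inv_closed by simp
    moreover have "inv k \<otimes> m \<in> C" using r_same k m True by blast
    ultimately show ?thesis using True
      by (simp add: lam_tilde_def mu_def t_def[symmetric])
  next
    case False
    then have "inv k \<otimes> m \<notin> C" using same_r[OF k m] by auto
    then show ?thesis using False by (simp add: lam_tilde_def)
  qed

  have "(\<Sum>k\<in>?A. \<Sum>m\<in>?A. cnj (a k) * a m * lam_tilde C lam (inv k \<otimes> m))
      = (\<Sum>k\<in>?A. cnj (mu k) * P (r k))"
  proof (rule sum.cong[OF refl])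
    fix k assume k: "k \<in> ?A"
    have "cnj (mu k) * P (r k) = (\<Sum>m\<in>{m\<in>?A. r m = r k}. cnj (mu k) * mu m)"
      by (simp add: P_def sum_distrib_left)
    also have "\<dots> = (\<Sum>m\<in>?A. if r m = r k then cnj (mu k) * mu m else 0)"
      by (rule sum.inter_filter[OF finA])
    also have "\<dots> = (\<Sum>m\<in>?A. cnj (a k) * a m * lam_tilde C lam (inv k \<otimes> m))"
    proof (rule sum.cong[OF refl])
      fix m assume m: "m \<in> ?A"
      have kc: "k \<in> carrier G" and mc: "m \<in> carrier G" using k m Asub by auto
      show "(if r m = r k then cnj (mu k) * mu m else 0) = cnj (a k) * a m * lam_tilde C lam (inv k \<otimes> m)"
        using termeq[OF kc mc] by (auto split: if_splits)
    qed
    finally show "(\<Sum>m\<in>?A. cnj (a k) * a m * lam_tilde C lam (inv k \<otimes> m)) = cnj (mu k) * P (r k)" by simp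
  qed
  also have "\<dots> = (\<Sum>t\<in>T. \<Sum>k\<in>{k\<in>?A. r k = t}. cnj (mu k) * P (r k))"
    by (rule sum.group[OF finA finT rT, symmetric])
  also have "\<dots> = (\<Sum>t\<in>T. cnj (P t) * P t)"
    by (intro sum.cong) (auto simp: P_def sum_distrib_right)
  also have "\<dots> = of_real (\<Sum>t\<in>T. (cmod (P t))\<^sup>2)"
    by (simp only: of_real_sum complex_norm_square mult.commute)
  finally have X: "(\<Sum>k\<in>?A. \<Sum>m\<in>?A. cnj (a k) * a m * lam_tilde C lam (inv k \<otimes> m)) = complex_of_real (\<Sum>t\<in>T. (cmod (P t))\<^sup>2)" .
  have "complex_of_real (\<Sum>t\<in>T. (cmod (P t))\<^sup>2) = 0" using X Q0 by metis
  then have "(\<Sum>t\<in>T. (cmod (P t))\<^sup>2) = 0" by (simp only: of_real_eq_0_iff)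
  then have P0: "P t = 0" if "t \<in> T" for t
    using sum_nonneg_eq_0_iff[OF finT, of "\<lambda>t. (cmod (P t))\<^sup>2"] that by simp

  have a_eq: "a = (\<lambda>g. \<Sum>m\<in>?A. a m * ga_delta m g)"
  proof
    fix g
    have "(\<Sum>m\<in>?A. a m * ga_delta m g) = (\<Sum>m\<in>?A. if g = m then a g else 0)"
      by (intro sum.cong) (auto simp: ga_delta_def)
    also have "\<dots> = a g" using finA by simp
    finally show "a g = (\<Sum>m\<in>?A. a m * ga_delta m g)" by simp
  qed
  have rho_delta: "rho (ga_delta m) x = sc (lam (inv (r m) \<otimes> m)) (rho (ga_delta (r m)) x)"
    if m: "m \<in> carrier G" for m x
  proof -
    have c: "inv (r m) \<otimes> m \<in> C" using rinC[OF m] .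
    have cc: "inv (r m) \<otimes> m \<in> carrier G" using c C.subset by blast
    have "ga_delta m = ga_mult G (ga_delta (r m)) (ga_delta (inv (r m) \<otimes> m))"
      using delta_mult[OF rc[OF m] cc] cancel1 rc[OF m] m by simp
    then have "rho (ga_delta m) = rho (ga_delta (r m)) \<circ> rho (ga_delta (inv (r m) \<otimes> m))"
      using mult[rule_format, OF delta_in[OF rc[OF m]] delta_in[OF cc]] by simp
    moreover have "rho (ga_delta (inv (r m) \<otimes> m)) = (\<lambda>x. sc (lam (inv (r m) \<otimes> m)) x)"
      using onC c by blast
    ultimately have "rho (ga_delta m) x = rho (ga_delta (r m)) (sc (lam (inv (r m) \<otimes> m)) x)"
      by simp
    moreover have "bounded_op sc ip (rho (ga_delta (r m)))" using bnd[rule_format, OF delta_in[OF rc[OF m]]] .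
    ultimately show ?thesis by (simp add: bounded_op_def)
  qed
  show ?thesis
  proof
    fix x
    have eq: "rho (\<lambda>g. \<Sum>m\<in>?A. a m * ga_delta m g) = (\<lambda>x. \<Sum>m\<in>?A. sc (a m) (rho (ga_delta m) x))"
      by (rule rho_lin[OF rep hadd finA Asub, where c=a])
    have "rho a x = (\<Sum>m\<in>?A. sc (a m) (rho (ga_delta m) x))"
      by (subst a_eq) (simp only: eq)
    also have "\<dots> = (\<Sum>m\<in>?A. sc (mu m) (rho (ga_delta (r m)) x))"
      using Asub by (intro sum.cong) (auto simp: rho_delta hmul mu_def)
    also have "\<dots> = (\<Sum>t\<in>T. \<Sum>m\<in>{m\<in>?A. r m = t}. sc (mu m) (rho (ga_delta (r m)) x))"
      by (rule sum.group[OF finA finT rT, symmetric])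
    also have "\<dots> = (\<Sum>t\<in>T. sc (P t) (rho (ga_delta t) x))"
      by (intro sum.cong) (auto simp: P_def sc_sum[OF hadd] finA)
    also have "\<dots> = 0" using P0 by (simp add: sc_zero[OF hadd])
    finally show "rho a x = 0" .
  qed
qed

end

theorem proposition5p5:
  fixes G :: "('g, 'b) monoid_scheme" and C :: "'g set" and lam :: "'g \<Rightarrow> complex"
    and sc :: "complex \<Rightarrow> 'h::ab_group_add \<Rightarrow> 'h" and ip :: "'h \<Rightarrow> 'h \<Rightarrow> complex"
    and rho :: "('g \<Rightarrow> complex) \<Rightarrow> 'h \<Rightarrow> 'h"
  assumes "group G" and "countable (carrier G)" and "subgroup C G"
    and "one_dim_rep G C lam"
    and "complex_hilbert sc ip"
    and "star_rep_CG G sc ip rho"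
    and "\<forall>c\<in>C. rho (ga_delta c) = (\<lambda>x. sc (lam c) x)"
  shows "gns_kernel_CG G C lam \<subseteq> {a \<in> group_alg G. rho a = (\<lambda>x. 0)}"
proof
  fix a assume aK: "a \<in> gns_kernel_CG G C lam"
  have "rho a = (\<lambda>x. 0)"
    by (rule group.main[OF assms(1) assms(3) assms(4) assms(5) assms(6) assms(7) aK])
  moreover have "a \<in> group_alg G" using aK by (simp add: gns_kernel_CG_def)
  ultimately show "a \<in> {a \<in> group_alg G. rho a = (\<lambda>x. 0)}" by simp
qed

end
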